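(* Let $\mathbf{X}\sim\mathcal{MSP}(\boldsymbol{\mu},\mathbf{K})$ be a $p$-variate $L^2$-continuous process on a compact interval $\mathcal{T}=\mathcal{T}_1\cup\dots\cup\mathcal{T}_d$ (pairwise disjoint subintervals), let $(\pi_i,\boldsymbol{\psi}_i)$, $i=1,\dots,M$, be the $M$ largest eigenpairs of its covariance operator with $\pi_M>0$, and write $\psi_{i,k}=\boldsymbol{\psi}_i'\mathbf{e}_k$ for the $k$th component of $\boldsymbol{\psi}_i$. For a set $Q\subseteq\{1,\dots,p\}\times\{1,\dots,d\}$ of (coordinate, interval) cells define $\hat{\mathbf{X}}^{Q}$ by $\hat X^{Q}_j(t)=X_j(t)$ if $t\in\mathcal{T}_b$ with $(j,b)\in Q$, and $\hat X^Q_j(t)=\mu_j(t)$ otherwise. Let $\Theta_{k,\mathcal{T}_a}(\mathbf{X},\boldsymbol{\mu};\mathbf{K},M)$ be the Shapley value of the cell $(k,a)$ in the cooperative game on the $pd$ players $\{1,\dots,p\}\times\{1,\dots,d\}$ with value function $v(Q)=\mathrm{fMMD}^2(\hat{\mathbf{X}}^Q,\boldsymbol{\mu};\mathbf{K},M)$, i.e. $$\Theta_{k,\mathcal{T}_a}=\sum_{Q\subseteq(\{1,..,p\}\times\{1,..,d\})\setminus\{(k,a)\}}\frac{|Q|!(pd-|Q|-1)!}{(pd)!}\big[v(Q\cup\{(k,a)\})-v(Q)\big].$$ Then $$\Theta_{k,\mathcal{T}_a}(\mathbf{X},\boldsymbol{\mu};\mathbf{K},M)=\sum_{i=1}^M\frac{1}{\pi_i}\langle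 X_k-\mu_k,\psi_{i,k}\rangle_{\mathcal{T}_a}\langle\mathbf{X}-\boldsymbol{\mu},\boldsymbol{\psi}_i\rangle.$$
   Context: $\mathcal{H}=L^2(\mathcal{T})^p$ with $\langle\mathbf{x},\mathbf{y}\rangle=\sum_j\int_{\mathcal{T}}x_jy_j$; for scalar functions $\langle f,g\rangle_{\mathcal{T}_a}=\int_{\mathcal{T}_a}fg$. $\mathbf{X}\sim\mathcal{MSP}(\boldsymbol{\mu},\mathbf{K})$ means $\mathbf{X}$ has mean $\boldsymbol{\mu}(t)=E\mathbf{X}(t)$ and covariance kernel $\mathbf{K}(s,t)=[\mathrm{Cov}(X_i(s),X_j(t))]$; the covariance operator is $\mathcal{C}\mathbf{x}(s)=\int\mathbf{K}(s,t)\mathbf{x}(t)dt$ with orthonormal eigenfunctions $\boldsymbol{\psi}_i$ and nonincreasing eigenvalues $\pi_i$. $\mathrm{fMMD}^2(\mathbf{Y},\boldsymbol{\mu};\mathbf{K},M)=\sum_{i=1}^M\pi_i^{-1}\langle\mathbf{Y}-\boldsymbol{\mu},\boldsymbol{\psi}_i\rangle^2$. $\mathbf{e}_k$ is the $k$th canonical basis vector of $\mathbb{R}^p$. *)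

theory Defs
  imports "HOL-Probability.Probability"
begin

text \<open>p-variate functions on the real line are represented as functions
  real => nat => real, the coordinate index j ranging over {1..p}.\<close>

definition innerH :: "real set \<Rightarrow> nat \<Rightarrow> (real \<Rightarrow> nat \<Rightarrow> real) \<Rightarrow> (real \<Rightarrow> nat \<Rightarrow> real) \<Rightarrow> real" where
  "innerH T p x y = (\<Sum>j\<in>{1..p}. LINT t:T|lborel. x t j * y t j)"

definition innerS :: "real set \<Rightarrow> (real \<Rightarrow> real) \<Rightarrow> (real \<Rightarrow> real) \<Rightarrow> real" where
  "innerS A f g = (LINT t:A|lborel. f t * g t)"

definition sqint :: "real set \<Rightarrow> (real \<Rightarrow> real) \<Rightarrow> bool" where
  "sqint A f \<longleftrightarrow> set_borel_measurable lborel A f \<and> set_integrable lborel A (\<lambda>t. (f t)^2)"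

definition inH :: "real set \<Rightarrow> nat \<Rightarrow> (real \<Rightarrow> nat \<Rightarrow> real) \<Rightarrow> bool" where
  "inH T p x \<longleftrightarrow> (\<forall>j\<in>{1..p}. sqint T (\<lambda>t. x t j))"

definition covop :: "real set \<Rightarrow> nat \<Rightarrow> (real \<Rightarrow> real \<Rightarrow> nat \<Rightarrow> nat \<Rightarrow> real) \<Rightarrow> (real \<Rightarrow> nat \<Rightarrow> real) \<Rightarrow> real \<Rightarrow> nat \<Rightarrow> real" where
  "covop T p K x s j = (\<Sum>k\<in>{1..p}. LINT t:T|lborel. K s t j k * x t k)"

definition fMMD2 :: "real set \<Rightarrow> nat \<Rightarrow> (nat \<Rightarrow> real) \<Rightarrow> (nat \<Rightarrow> real \<Rightarrow> nat \<Rightarrow> real) \<Rightarrow> nat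
    \<Rightarrow> (real \<Rightarrow> nat \<Rightarrow> real) \<Rightarrow> (real \<Rightarrow> nat \<Rightarrow> real) \<Rightarrow> real" where
  "fMMD2 T p \<pi> \<psi> M Y \<mu> = (\<Sum>i\<in>{1..M}. (1 / \<pi> i) * (innerH T p (\<lambda>t j. Y t j - \<mu> t j) (\<psi> i))^2)"

definition Xhat :: "(nat \<Rightarrow> real set) \<Rightarrow> nat \<Rightarrow> (nat \<times> nat) set \<Rightarrow> (real \<Rightarrow> nat \<Rightarrow> real) \<Rightarrow> (real \<Rightarrow> nat \<Rightarrow> real)
    \<Rightarrow> real \<Rightarrow> nat \<Rightarrow> real" where
  "Xhat Tsub d Q X \<mu> t j = (if \<exists>b\<in>{1..d}. t \<in> Tsub b \<and> (j, b) \<in> Q then X t j else \<mu> t j)"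

definition shapley :: "'a set \<Rightarrow> ('a set \<Rightarrow> real) \<Rightarrow> 'a \<Rightarrow> real" where
  "shapley N v q = (\<Sum>Q\<in>Pow (N - {q}).
     (fact (card Q) * fact (card N - card Q - 1) / fact (card N)) * (v (insert q Q) - v Q))"

definition (in prob_space) covariance :: "('a \<Rightarrow> real) \<Rightarrow> ('a \<Rightarrow> real) \<Rightarrow> real" where
  "covariance U V = expectation (\<lambda>w. (U w - expectation U) * (V w - expectation V))"

end

theory Submission
  imports Defs
begin


lemma sum_Pow_card:
  fixes g :: "nat \<Rightarrow> real"
  assumes "finite A"
  shows "(\<Sum>R\<in>Pow A. g (card R)) = (\<Sum>s=0..card A. real (card A choose s) * g s)"
proof -
  have "(\<Sum>R\<in>Pow A. g (card R)) = (\<Sum>s\<in>{0..card A}. \<Sum>R\<in>{R\<in>Pow A. card R = s}. g (card R))"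
    by (rule sum.group[symmetric]) (use assms in \<open>auto intro: card_mono\<close>)
  also have "\<dots> = (\<Sum>s=0..card A. real (card A choose s) * g s)"
  proof (rule sum.cong[OF refl])
    fix s assume "s \<in> {0..card A}"
    have "(\<Sum>R\<in>{R\<in>Pow A. card R = s}. g (card R)) = (\<Sum>R\<in>{R\<in>Pow A. card R = s}. g s)"
      by (rule sum.cong) auto
    also have "\<dots> = real (card {R\<in>Pow A. card R = s}) * g s" by simp
    also have "{R\<in>Pow A. card R = s} = {R. R \<subseteq> A \<and> card R = s}" by auto
    also have "card \<dots> = card A choose s" using n_subsets[OF assms] by simp
    finally show "(\<Sum>R\<in>{R\<in>Pow A. card R = s}. g (card R)) = real (card A choose s) * g s" by simp
  qed
  finally show ?thesis .
qed

lemma frac_aux: "c * a * b = (F::real) \<Longrightarrow> c * (a * b / G) = F / G"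
  by (metis mult.assoc times_divide_eq_right)

lemma shapley_weights_sum:
  assumes "finite N" "q \<in> N"
  shows "(\<Sum>Q\<in>Pow (N - {q}). fact (card Q) * fact (card N - card Q - 1) / fact (card N) :: real) = 1"
proof -
  define A where "A = N - {q}"
  define m where "m = card A"
  have fA: "finite A" using assms by (simp add: A_def)
  have cN: "card N = Suc m" using assms unfolding m_def A_def by (rule card.remove)
  have "(\<Sum>Q\<in>Pow A. fact (card Q) * fact (card N - card Q - 1) / fact (card N) :: real)
      = (\<Sum>Q\<in>Pow A. fact (card Q) * fact (Suc m - card Q - 1) / fact (Suc m))"
    by (simp only: cN)
  also have "\<dots> = (\<Sum>s=0..m. real (m choose s) * (fact s * fact (Suc m - s - 1) / fact (Suc m)))"
    unfolding m_def by (rule sum_Pow_card[OF fA])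
  also have "\<dots> = (\<Sum>s=0..m. 1 / real (Suc m))"
  proof (rule sum.cong[OF refl])
    fix s assume s: "s \<in> {0..m}"
    have "fact s * fact (m - s) * (m choose s) = (fact m :: nat)"
      using binomial_fact_lemma[of s m] s by simp
    then have "real (fact s * fact (m - s) * (m choose s)) = real (fact m)" by simp
    then have 1: "real (m choose s) * fact s * fact (m - s) = fact m"
      by (simp only: of_nat_mult of_nat_fact mult_ac)
    have 2: "(fact (Suc m) :: real) = real (Suc m) * fact m" by (simp only: fact_Suc)
    have 3: "Suc m - s - 1 = m - s" by simp
    have "real (m choose s) * (fact s * fact (Suc m - s - 1) / fact (Suc m)) = fact m / (real (Suc m) * fact m)"
      unfolding 3 2 by (rule frac_aux[OF 1])
    also have "\<dots> = 1 / real (Suc m)" by simp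
    finally show "real (m choose s) * (fact s * fact (Suc m - s - 1) / fact (Suc m)) = 1 / real (Suc m)" .
  qed
  also have "\<dots> = 1" by simp
  finally show ?thesis unfolding A_def .
qed

lemma gauss_real: "(\<Sum>s=0..r. real (Suc s)) = real (Suc r) * real (Suc (Suc r)) / 2"
  by (induction r) (simp_all add: field_simps)

lemma inner_weight_sum:
  fixes r :: nat
  assumes "finite B" "card B = r"
  shows "(\<Sum>R\<in>Pow B. fact (card R + 1) * fact (Suc (Suc r) - (card R + 1) - 1) / fact (Suc (Suc r)) :: real)
     = 1/2"
proof -
  have "(\<Sum>R\<in>Pow B. fact (card R + 1) * fact (Suc (Suc r) - (card R + 1) - 1) / fact (Suc (Suc r)) :: real)
     = (\<Sum>s=0..r. real (r choose s) * (fact (s + 1) * fact (Suc (Suc r) - (s + 1) - 1) / fact (Suc (Suc r))))"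
    using sum_Pow_card[of B "\<lambda>s. fact (s + 1) * fact (Suc (Suc r) - (s + 1) - 1) / fact (Suc (Suc r))"] assms
    by simp
  also have "\<dots> = (\<Sum>s=0..r. real (Suc s) / (real (Suc r) * real (Suc (Suc r))))"
  proof (rule sum.cong[OF refl])
    fix s assume s: "s \<in> {0..r}"
    have "fact s * fact (r - s) * (r choose s) = (fact r :: nat)"
      using binomial_fact_lemma[of s r] s by simp
    then have "real (fact s * fact (r - s) * (r choose s)) = real (fact r)" by simp
    then have 1: "real (r choose s) * fact s * fact (r - s) = fact r"
      by (simp only: of_nat_mult of_nat_fact mult_ac)
    have 2: "(fact (Suc (Suc r)) :: real) = real (Suc (Suc r)) * (real (Suc r) * fact r)"
      by (simp only: fact_Suc)
    have 3: "Suc (Suc r) - (s + 1) - 1 = r - s" by simp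
    have 4: "(fact (s + 1) :: real) = real (Suc s) * fact s" by (simp only: Suc_eq_plus1[symmetric] fact_Suc)
    have "real (r choose s) * (fact (s + 1) * fact (Suc (Suc r) - (s + 1) - 1) / fact (Suc (Suc r)))
       = real (Suc s) * (real (r choose s) * fact s * fact (r - s)) / (real (Suc (Suc r)) * (real (Suc r) * fact r))"
      unfolding 2 3 4 by (simp add: mult_ac)
    also have "\<dots> = real (Suc s) * fact r / (real (Suc (Suc r)) * (real (Suc r) * fact r))"
      unfolding 1 ..
    also have "\<dots> = real (Suc s) / (real (Suc r) * real (Suc (Suc r)))"
      by (simp add: field_simps del: of_nat_Suc)
    finally show "real (r choose s) * (fact (s + 1) * fact (Suc (Suc r) - (s + 1) - 1) / fact (Suc (Suc r)))
       = real (Suc s) / (real (Suc r) * real (Suc (Suc r)))" .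
  qed
  also have "\<dots> = (\<Sum>s=0..r. real (Suc s)) / (real (Suc r) * real (Suc (Suc r)))"
    by (simp add: sum_divide_distrib)
  also have "\<dots> = 1/2" unfolding gauss_real by (simp del: of_nat_Suc)
  finally show ?thesis .
qed

lemma weighted_linear_sum:
  fixes z :: "'a \<Rightarrow> real"
  assumes N: "finite N" and q: "q \<in> N"
  shows "(\<Sum>Q\<in>Pow (N - {q}). fact (card Q) * fact (card N - card Q - 1) / fact (card N) * (\<Sum>x\<in>Q. z x))
       = 1/2 * (\<Sum>x\<in>N - {q}. z x)"
proof -
  define A where "A = N - {q}"
  define w where "w Q = (fact (card Q) * fact (card N - card Q - 1) / fact (card N) :: real)" for Q :: "'a set"
  have fA: "finite A" using N by (simp add: A_def)
  have "(\<Sum>Q\<in>Pow A. w Q * (\<Sum>x\<in>Q. z x)) = (\<Sum>Q\<in>Pow A. \<Sum>x\<in>A. (if x \<in> Q then w Q * z x else 0))"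
  proof (rule sum.cong[OF refl])
    fix Q assume Q: "Q \<in> Pow A"
    have "(\<Sum>x\<in>A. (if x \<in> Q then w Q * z x else 0)) = (\<Sum>x\<in>A \<inter> Q. w Q * z x)"
      using fA by (simp add: sum.If_cases)
    also have "A \<inter> Q = Q" using Q by auto
    finally show "w Q * (\<Sum>x\<in>Q. z x) = (\<Sum>x\<in>A. (if x \<in> Q then w Q * z x else 0))"
      by (simp add: sum_distrib_left)
  qed
  also have "\<dots> = (\<Sum>x\<in>A. \<Sum>Q\<in>Pow A. (if x \<in> Q then w Q * z x else 0))"
    by (rule sum.swap)
  also have "\<dots> = (\<Sum>x\<in>A. z x * (1/2))"
  proof (rule sum.cong[OF refl])
    fix x assume x: "x \<in> A"
    have "(\<Sum>Q\<in>Pow A. (if x \<in> Q then w Q * z x else 0)) = (\<Sum>Q\<in>{Q\<in>Pow A. x \<in> Q}. w Q) * z x"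
      using fA by (simp add: sum.If_cases sum_distrib_right Int_def conj_commute)
    also have "{Q\<in>Pow A. x \<in> Q} = insert x ` Pow (A - {x})"
    proof
      show "{Q \<in> Pow A. x \<in> Q} \<subseteq> insert x ` Pow (A - {x})"
      proof
        fix Q assume "Q \<in> {Q \<in> Pow A. x \<in> Q}"
        then have "Q = insert x (Q - {x})" "Q - {x} \<in> Pow (A - {x})" by auto
        then show "Q \<in> insert x ` Pow (A - {x})" by blast
      qed
    qed (use x in auto)
    also have "(\<Sum>Q\<in>insert x ` Pow (A - {x}). w Q) = (\<Sum>R\<in>Pow (A - {x}). w (insert x R))"
    proof -
      have "inj_on (insert x) (Pow (A - {x}))"
        unfolding inj_on_def by (metis Diff_insert_absorb PowD subset_Diff_insert)
      from sum.reindex[OF this, of w] show ?thesis by (simp add: comp_def)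
    qed
    also have "\<dots> = (\<Sum>R\<in>Pow (A - {x}). fact (card R + 1) * fact (Suc (Suc (card (A - {x}))) - (card R + 1) - 1)
          / fact (Suc (Suc (card (A - {x})))))"
    proof (rule sum.cong[OF refl])
      fix R assume R: "R \<in> Pow (A - {x})"
      have fR: "finite R" using R fA by (meson PowD finite_Diff finite_subset)
      have "x \<notin> R" using R by auto
      then have "card (insert x R) = card R + 1" using fR by simp
      moreover have "card N = Suc (Suc (card (A - {x})))"
        using N q x fA unfolding A_def by (metis card.remove finite_Diff)
      ultimately show "w (insert x R) = fact (card R + 1) * fact (Suc (Suc (card (A - {x}))) - (card R + 1) - 1)
          / fact (Suc (Suc (card (A - {x}))))"
        unfolding w_def by simp
    qed
    also have "\<dots> = 1/2" by (rule inner_weight_sum) (use fA in auto)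
    finally show "(\<Sum>Q\<in>Pow A. (if x \<in> Q then w Q * z x else 0)) = z x * (1/2)" by simp
  qed
  also have "\<dots> = 1/2 * (\<Sum>x\<in>A. z x)" by (simp add: sum_distrib_left mult.commute)
  finally show ?thesis unfolding A_def w_def .
qed

lemma shapley_sq:
  fixes z :: "'a \<Rightarrow> real"
  assumes N: "finite N" and q: "q \<in> N"
  shows "shapley N (\<lambda>Q. (\<Sum>x\<in>Q. z x)^2) q = z q * (\<Sum>x\<in>N. z x)"
proof -
  define w where "w Q = (fact (card Q) * fact (card N - card Q - 1) / fact (card N) :: real)" for Q :: "'a set"
  have "shapley N (\<lambda>Q. (\<Sum>x\<in>Q. z x)^2) q
     = (\<Sum>Q\<in>Pow (N - {q}). w Q * (z q ^ 2) + 2 * z q * (w Q * (\<Sum>x\<in>Q. z x)))"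
    unfolding shapley_def w_def
  proof (rule sum.cong[OF refl])
    fix Q assume Q: "Q \<in> Pow (N - {q})"
    have fQ: "finite Q" using Q N by (meson PowD finite_Diff finite_subset)
    have "q \<notin> Q" using Q by auto
    then have "(\<Sum>x\<in>insert q Q. z x) = z q + (\<Sum>x\<in>Q. z x)" using fQ by simp
    then show "fact (card Q) * fact (card N - card Q - 1) / fact (card N) *
          ((\<Sum>x\<in>insert q Q. z x)\<^sup>2 - (\<Sum>x\<in>Q. z x)\<^sup>2) =
         fact (card Q) * fact (card N - card Q - 1) / fact (card N) * (z q ^ 2) +
         2 * z q * (fact (card Q) * fact (card N - card Q - 1) / fact (card N) * (\<Sum>x\<in>Q. z x))"
      by (simp add: power2_eq_square algebra_simps)
  qed
  also have "\<dots> = (\<Sum>Q\<in>Pow (N - {q}). w Q) * z q ^ 2 + 2 * z q * (\<Sum>Q\<in>Pow (N - {q}). w Q * (\<Sum>x\<in>Q. z x))"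
    by (simp add: sum.distrib sum_distrib_left sum_distrib_right)
  also have "(\<Sum>Q\<in>Pow (N - {q}). w Q) = 1"
    unfolding w_def by (rule shapley_weights_sum[OF N q])
  also have "(\<Sum>Q\<in>Pow (N - {q}). w Q * (\<Sum>x\<in>Q. z x)) = 1/2 * (\<Sum>x\<in>N - {q}. z x)"
    unfolding w_def by (rule weighted_linear_sum[OF N q])
  also have "(\<Sum>x\<in>N. z x) = z q + (\<Sum>x\<in>N - {q}. z x)"
    using N q by (simp add: sum.remove)
  ultimately show ?thesis by (simp add: power2_eq_square algebra_simps)
qed

lemma shapley_lin:
  fixes c :: "'b \<Rightarrow> real" and g :: "'b \<Rightarrow> 'a set \<Rightarrow> real"
  shows "shapley N (\<lambda>Q. \<Sum>i\<in>I. c i * g i Q) q = (\<Sum>i\<in>I. c i * shapley N (g i) q)"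
  unfolding shapley_def
  by (simp add: sum_distrib_left sum_subtractf[symmetric] right_diff_distrib mult_ac sum.swap[of _ I])

lemma shapley_cong:
  assumes "\<And>Q. Q \<subseteq> N \<Longrightarrow> v Q = v' Q" "q \<in> N"
  shows "shapley N v q = shapley N v' q"
proof -
  have h: "v (insert q Q) = v' (insert q Q) \<and> v Q = v' Q" if "Q \<subseteq> N - {q}" for Q
  proof
    have "insert q Q \<subseteq> N" "Q \<subseteq> N" using assms(2) that by auto
    then show "v (insert q Q) = v' (insert q Q)" "v Q = v' Q" using assms(1) by auto
  qed
  show ?thesis unfolding shapley_def by (rule sum.cong[OF refl]) (simp add: h)
qed



lemma abs_mult_le_sq: "\<bar>a * b\<bar> \<le> a^2 + (b::real)^2"
proof -
  have "0 \<le> (\<bar>a\<bar> - \<bar>b\<bar>)^2" by simp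
  then have "2 * (\<bar>a\<bar> * \<bar>b\<bar>) \<le> \<bar>a\<bar>^2 + \<bar>b\<bar>^2" by (simp add: power2_eq_square algebra_simps)
  moreover have "0 \<le> \<bar>a\<bar> * \<bar>b\<bar>" "0 \<le> a^2" "0 \<le> b^2" "\<bar>a\<bar>^2 = a^2" "\<bar>b\<bar>^2 = b^2" by simp_all
  ultimately have "\<bar>a\<bar> * \<bar>b\<bar> \<le> a^2 + b^2" by linarith
  then show ?thesis by (simp add: abs_mult)
qed

lemma sqint_prod:
  assumes "sqint A f" "sqint A g"
  shows "set_integrable lborel A (\<lambda>t. f t * g t)"
proof -
  have mf: "(\<lambda>x. indicator A x *\<^sub>R f x) \<in> borel_measurable lborel"
   and mg: "(\<lambda>x. indicator A x *\<^sub>R g x) \<in> borel_measurable lborel"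
   and i1: "integrable lborel (\<lambda>x. indicator A x *\<^sub>R (f x)^2)"
   and i2: "integrable lborel (\<lambda>x. indicator A x *\<^sub>R (g x)^2)"
    using assms unfolding sqint_def set_borel_measurable_def set_integrable_def by auto
  have eq: "(\<lambda>x. indicator A x *\<^sub>R (f x * g x)) = (\<lambda>x. (indicator A x *\<^sub>R f x) * (indicator A x *\<^sub>R g x))"
    by (auto simp: indicator_def fun_eq_iff)
  have meas: "(\<lambda>x. indicator A x *\<^sub>R (f x * g x)) \<in> borel_measurable lborel"
    unfolding eq using mf mg by (rule borel_measurable_times)
  have "integrable lborel (\<lambda>x. indicator A x *\<^sub>R (f x)^2 + indicator A x *\<^sub>R (g x)^2)"
    using i1 i2 by (rule Bochner_Integration.integrable_add)
  then have "integrable lborel (\<lambda>x. indicator A x *\<^sub>R (f x * g x))"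
  proof (rule Bochner_Integration.integrable_bound[OF _ meas])
    show "AE x in lborel. norm (indicator A x *\<^sub>R (f x * g x)) \<le> norm (indicator A x *\<^sub>R (f x)^2 + indicator A x *\<^sub>R (g x)^2)"
      using abs_mult_le_sq by (auto simp: indicator_def)
  qed
  then show ?thesis unfolding set_integrable_def .
qed

lemma exp_sq_le:
  fixes Y :: "'w \<Rightarrow> real"
  assumes P: "prob_space P" and m: "Y \<in> borel_measurable P" and i: "integrable P (\<lambda>w. (Y w)^2)"
  shows "(integral\<^sup>L P Y)^2 \<le> integral\<^sup>L P (\<lambda>w. (Y w)^2)"
proof -
  interpret prob_space P by (rule P)
  have "integrable P Y" using m i by (rule square_integrable_imp_integrable)
  then have "variance Y = expectation (\<lambda>x. (Y x)\<^sup>2) - (expectation Y)\<^sup>2"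
    using i by (rule variance_eq)
  moreover have "0 \<le> variance Y" by (rule variance_positive)
  ultimately show ?thesis by simp
qed

lemma sq_diff_integrable:
  assumes ma: "(a::'w \<Rightarrow> real) \<in> borel_measurable P" and mb: "b \<in> borel_measurable P"
    and ia: "integrable P (\<lambda>w. (a w)^2)" and ib: "integrable P (\<lambda>w. (b w)^2)"
  shows "integrable P (\<lambda>w. (a w - b w)^2)"
proof -
  have "integrable P (\<lambda>w. 2 * (a w)^2 + 2 * (b w)^2)" using ia ib by simp
  then show ?thesis
  proof (rule Bochner_Integration.integrable_bound)
    show "(\<lambda>w. (a w - b w)^2) \<in> borel_measurable P" using ma mb by measurable
    show "AE x in P. norm ((a x - b x)\<^sup>2) \<le> norm (2 * (a x)\<^sup>2 + 2 * (b x)\<^sup>2)"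
    proof (rule AE_I2)
      fix x
      have "0 \<le> (a x + b x)^2" by simp
      then have "(a x - b x)^2 \<le> 2 * (a x)\<^sup>2 + 2 * (b x)\<^sup>2"
        by (simp add: power2_eq_square algebra_simps)
      then show "norm ((a x - b x)\<^sup>2) \<le> norm (2 * (a x)\<^sup>2 + 2 * (b x)\<^sup>2)"
        by simp
    qed
  qed
qed

lemma mean_cont:
  fixes Xj :: "'w \<Rightarrow> real \<Rightarrow> real"
  assumes P: "prob_space P"
    and rv: "\<forall>t\<in>T. (\<lambda>w. Xj w t) \<in> borel_measurable P"
    and L2: "\<forall>t\<in>T. integrable P (\<lambda>w. (Xj w t)^2)"
    and L2c: "\<forall>t\<in>T. ((\<lambda>s. integral\<^sup>L P (\<lambda>w. (Xj w s - Xj w t)^2)) \<longlongrightarrow> 0) (at t within T)"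
  shows "continuous_on T (\<lambda>t. integral\<^sup>L P (\<lambda>w. Xj w t))"
proof -
  interpret prob_space P by (rule P)
  have int: "integrable P (\<lambda>w. Xj w t)" if "t \<in> T" for t
    using rv L2 that by (blast intro: square_integrable_imp_integrable)
  have le: "\<bar>integral\<^sup>L P (\<lambda>w. Xj w s) - integral\<^sup>L P (\<lambda>w. Xj w t)\<bar>
      \<le> sqrt (integral\<^sup>L P (\<lambda>w. (Xj w s - Xj w t)^2))" if "s \<in> T" "t \<in> T" for s t
  proof -
    have "integral\<^sup>L P (\<lambda>w. Xj w s) - integral\<^sup>L P (\<lambda>w. Xj w t) = integral\<^sup>L P (\<lambda>w. Xj w s - Xj w t)"
      using int that by simp
    moreover have "(integral\<^sup>L P (\<lambda>w. Xj w s - Xj w t))^2 \<le> integral\<^sup>L P (\<lambda>w. (Xj w s - Xj w t)^2)"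
      by (rule exp_sq_le[OF P]) (use rv L2 that in \<open>auto intro!: sq_diff_integrable borel_measurable_diff\<close>)
    ultimately show ?thesis by (metis real_sqrt_abs real_sqrt_le_mono)
  qed
  show ?thesis unfolding continuous_on_def
  proof
    fix t assume t: "t \<in> T"
    have "((\<lambda>s. sqrt (integral\<^sup>L P (\<lambda>w. (Xj w s - Xj w t)^2))) \<longlongrightarrow> sqrt 0) (at t within T)"
      using L2c t by (intro tendsto_real_sqrt) auto
    then have g0: "((\<lambda>s. sqrt (integral\<^sup>L P (\<lambda>w. (Xj w s - Xj w t)^2))) \<longlongrightarrow> 0) (at t within T)" by simp
    have ev: "eventually (\<lambda>s. norm (integral\<^sup>L P (\<lambda>w. Xj w s) - integral\<^sup>L P (\<lambda>w. Xj w t))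
        \<le> sqrt (integral\<^sup>L P (\<lambda>w. (Xj w s - Xj w t)^2))) (at t within T)"
      unfolding eventually_at_filter using le t by (intro always_eventually) auto
    have "((\<lambda>s. integral\<^sup>L P (\<lambda>w. Xj w s) - integral\<^sup>L P (\<lambda>w. Xj w t)) \<longlongrightarrow> 0) (at t within T)"
      using ev g0 by (rule Lim_null_comparison)
    then show "((\<lambda>s. integral\<^sup>L P (\<lambda>w. Xj w s)) \<longlongrightarrow> integral\<^sup>L P (\<lambda>w. Xj w t)) (at t within T)"
      by (rule LIM_zero_cancel)
  qed
qed

lemma cont_sqint:
  fixes f :: "real \<Rightarrow> real"
  assumes "continuous_on {lo..hi} f"
  shows "sqint {lo..hi} f"
  unfolding sqint_def set_borel_measurable_def
proof
  show "(\<lambda>x. indicator {lo..hi} x *\<^sub>R f x) \<in> borel_measurable lborel"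
    using borel_measurable_continuous_on_indicator[OF _ assms] by simp
  show "set_integrable lborel {lo..hi} (\<lambda>t. (f t)\<^sup>2)"
    by (rule borel_integrable_atLeastAtMost') (intro continuous_intros assms)
qed



lemma innerH_Xhat:
  fixes Y m \<phi> :: "real \<Rightarrow> nat \<Rightarrow> real"
  assumes Tm: "T \<in> sets lborel"
    and Tsm: "\<forall>b\<in>{1..d}. Tsub b \<in> sets lborel"
    and sub: "\<forall>b\<in>{1..d}. Tsub b \<subseteq> T"
    and disj: "\<forall>b\<in>{1..d}. \<forall>c\<in>{1..d}. b \<noteq> c \<longrightarrow> Tsub b \<inter> Tsub c = {}"
    and intF: "\<forall>j\<in>{1..p}. set_integrable lborel T (\<lambda>t. (Y t j - m t j) * \<phi> t j)"
    and Q: "Q \<subseteq> {1..p} \<times> {1..d}"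
  shows "innerH T p (\<lambda>t j. Xhat Tsub d Q Y m t j - m t j) \<phi>
     = (\<Sum>c\<in>Q. LINT t:Tsub (snd c)|lborel. (Y t (fst c) - m t (fst c)) * \<phi> t (fst c))"
proof -
  define B where "B j = {b\<in>{1..d}. (j,b)\<in>Q}" for j
  define F where "F j t = (Y t j - m t j) * \<phi> t j" for j t
  have per: "(LINT t:T|lborel. (Xhat Tsub d Q Y m t j - m t j) * \<phi> t j) = (\<Sum>b\<in>B j. LINT t:Tsub b|lborel. F j t)"
    if j: "j \<in> {1..p}" for j
  proof -
    have pw: "(\<lambda>t. indicator T t *\<^sub>R ((Xhat Tsub d Q Y m t j - m t j) * \<phi> t j))
        = (\<lambda>t. \<Sum>b\<in>B j. indicator (Tsub b) t *\<^sub>R F j t)"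
    proof
      fix t
      show "indicator T t *\<^sub>R ((Xhat Tsub d Q Y m t j - m t j) * \<phi> t j)
        = (\<Sum>b\<in>B j. indicator (Tsub b) t *\<^sub>R F j t)"
      proof (cases "t \<in> T")
        case False
        have "\<forall>b\<in>B j. t \<notin> Tsub b" using False sub unfolding B_def by auto
        then show ?thesis using False by (simp add: indicator_def)
      next
        case True
        show ?thesis
        proof (cases "\<exists>b\<in>{1..d}. t \<in> Tsub b \<and> (j, b) \<in> Q")
          case ex: True
          then obtain b0 where b0: "b0 \<in> {1..d}" "t \<in> Tsub b0" "(j, b0) \<in> Q" by blast
          have b0B: "b0 \<in> B j" using b0 unfolding B_def by auto
          have fB: "finite (B j)" unfolding B_def by simp
          have "(\<Sum>b\<in>B j. indicator (Tsub b) t *\<^sub>R F j t)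
              = indicator (Tsub b0) t *\<^sub>R F j t + (\<Sum>b\<in>B j - {b0}. indicator (Tsub b) t *\<^sub>R F j t)"
            using fB b0B by (rule sum.remove)
          also have "(\<Sum>b\<in>B j - {b0}. indicator (Tsub b) t *\<^sub>R F j t) = 0"
          proof (rule sum.neutral, rule ballI)
            fix b assume b: "b \<in> B j - {b0}"
            then have "t \<notin> Tsub b" using disj b0 unfolding B_def by blast
            then show "indicator (Tsub b) t *\<^sub>R F j t = 0" by simp
          qed
          finally show ?thesis using True ex b0 unfolding Xhat_def F_def by simp
        next
          case nex: False
          have "\<forall>b\<in>B j. t \<notin> Tsub b" using nex unfolding B_def by auto
          have "Xhat Tsub d Q Y m t j = m t j" using nex unfolding Xhat_def by (simp only: if_False)
          then show ?thesis using \<open>\<forall>b\<in>B j. t \<notin> Tsub b\<close> True by (simp add: indicator_def)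
        qed
      qed
    qed
    have intb: "integrable lborel (\<lambda>t. indicator (Tsub b) t *\<^sub>R F j t)" if b: "b \<in> B j" for b
    proof -
      have bd: "b \<in> {1..d}" using b unfolding B_def by auto
      have "integrable lborel (\<lambda>t. indicator (Tsub b) t *\<^sub>R (indicator T t *\<^sub>R F j t))"
      proof (rule integrable_mult_indicator)
        show "Tsub b \<in> sets lborel" using Tsm bd by auto
        show "integrable lborel (\<lambda>t. indicator T t *\<^sub>R F j t)"
          using intF j unfolding set_integrable_def F_def by auto
      qed
      moreover have "(\<lambda>t. indicator (Tsub b) t *\<^sub>R (indicator T t *\<^sub>R F j t)) = (\<lambda>t. indicator (Tsub b) t *\<^sub>R F j t)"
        using sub bd by (auto simp: indicator_def fun_eq_iff)
      ultimately show ?thesis by simp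
    qed
    show ?thesis
      unfolding set_lebesgue_integral_def pw
      by (rule Bochner_Integration.integral_sum) (rule intb)
  qed
  have QS: "Q = Sigma {1..p} B" using Q unfolding B_def by auto
  have "innerH T p (\<lambda>t j. Xhat Tsub d Q Y m t j - m t j) \<phi> = (\<Sum>j\<in>{1..p}. \<Sum>b\<in>B j. LINT t:Tsub b|lborel. F j t)"
    unfolding innerH_def using per by (intro sum.cong) auto
  also have "\<dots> = (\<Sum>c\<in>Sigma {1..p} B. LINT t:Tsub (snd c)|lborel. F (fst c) t)"
    by (subst sum.Sigma) (auto simp: B_def split_def)
  finally show ?thesis unfolding QS F_def .
qed


theorem proposition2:
  fixes P :: "'w measure"
    and X :: "'w \<Rightarrow> real \<Rightarrow> nat \<Rightarrow> real"
    and \<mu> :: "real \<Rightarrow> nat \<Rightarrow> real"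
    and K :: "real \<Rightarrow> real \<Rightarrow> nat \<Rightarrow> nat \<Rightarrow> real"
    and lo hi :: real and p d M k a :: nat
    and Tsub :: "nat \<Rightarrow> real set"
    and \<pi> :: "nat \<Rightarrow> real" and \<psi> :: "nat \<Rightarrow> real \<Rightarrow> nat \<Rightarrow> real"
    and \<omega> :: 'w
  defines "T \<equiv> {lo..hi}"
  assumes P: "prob_space P"
    and p: "p \<ge> 1" and d: "d \<ge> 1" and M: "M \<ge> 1"
    and lohi: "lo \<le> hi"
    (* partition of T into pairwise disjoint subintervals *)
    and Tsub_int: "\<forall>b\<in>{1..d}. is_interval (Tsub b)"
    and Tsub_disj: "\<forall>b\<in>{1..d}. \<forall>c\<in>{1..d}. b \<noteq> c \<longrightarrow> Tsub b \<inter> Tsub c = {}"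
    and Tsub_union: "(\<Union>b\<in>{1..d}. Tsub b) = T"
    (* X is a p-variate second-order process with mean mu and covariance kernel K *)
    and X_rv: "\<forall>t\<in>T. \<forall>j\<in>{1..p}. (\<lambda>w. X w t j) \<in> borel_measurable P"
    and X_L2: "\<forall>t\<in>T. \<forall>j\<in>{1..p}. integrable P (\<lambda>w. (X w t j)^2)"
    and mean: "\<forall>t\<in>T. \<forall>j\<in>{1..p}. \<mu> t j = prob_space.expectation P (\<lambda>w. X w t j)"
    and cov: "\<forall>s\<in>T. \<forall>t\<in>T. \<forall>i\<in>{1..p}. \<forall>j\<in>{1..p}.
                K s t i j = prob_space.covariance P (\<lambda>w. X w s i) (\<lambda>w. X w t j)"
    (* L^2-continuity *)
    and L2cont: "\<forall>t\<in>T. \<forall>j\<in>{1..p}.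
       ((\<lambda>s. prob_space.expectation P (\<lambda>w. (X w s j - X w t j)^2)) \<longlongrightarrow> 0) (at t within T)"
    (* sample paths lie in H = L^2(T)^p *)
    and paths: "\<forall>w\<in>space P. inH T p (X w)"
    (* (pi_i, psi_i), i = 1..M: the M largest eigenpairs of the covariance operator *)
    and psi_H: "\<forall>i\<in>{1..M}. inH T p (\<psi> i)"
    and psi_orth: "\<forall>i\<in>{1..M}. \<forall>l\<in>{1..M}. innerH T p (\<psi> i) (\<psi> l) = (if i = l then 1 else 0)"
    and eigen: "\<forall>i\<in>{1..M}. \<forall>s\<in>T. \<forall>j\<in>{1..p}. covop T p K (\<psi> i) s j = \<pi> i * \<psi> i s j"
    and pi_noninc: "\<forall>i\<in>{1..<M}. \<pi> (Suc i) \<le> \<pi> i"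
    and largest: "\<forall>lam \<phi>. inH T p \<phi> \<and> innerH T p \<phi> \<phi> > 0
        \<and> (\<forall>s\<in>T. \<forall>j\<in>{1..p}. covop T p K \<phi> s j = lam * \<phi> s j)
        \<and> (\<forall>i\<in>{1..M}. innerH T p \<phi> (\<psi> i) = 0) \<longrightarrow> lam \<le> \<pi> M"
    and piM: "\<pi> M > 0"
    and \<omega>: "\<omega> \<in> space P"
    and k: "k \<in> {1..p}" and a: "a \<in> {1..d}"
  shows "shapley ({1..p} \<times> {1..d})
            (\<lambda>Q. fMMD2 T p \<pi> \<psi> M (Xhat Tsub d Q (X \<omega>) \<mu>) \<mu>) (k, a)
         = (\<Sum>i\<in>{1..M}. (1 / \<pi> i)
              * innerS (Tsub a) (\<lambda>t. X \<omega> t k - \<mu> t k) (\<lambda>t. \<psi> i t k)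
              * innerH T p (\<lambda>t j. X \<omega> t j - \<mu> t j) (\<psi> i))"
  proof -
  define N where "N = {1..p} \<times> {1..d}"
  define F where "F i j t = (X \<omega> t j - \<mu> t j) * \<psi> i t j" for i j t
  define z where "z i c = (LINT t:Tsub (snd c)|lborel. F i (fst c) t)" for i c
  have Tm: "T \<in> sets lborel" by (simp add: T_def)
  have Tsm: "\<forall>b\<in>{1..d}. Tsub b \<in> sets lborel"
    using Tsub_int real_interval_borel_measurable by simp
  have sub: "\<forall>b\<in>{1..d}. Tsub b \<subseteq> T" using Tsub_union by blast
  have mucont: "continuous_on T (\<lambda>t. \<mu> t j)" if j: "j \<in> {1..p}" for j
  proof -
    have cont: "continuous_on T (\<lambda>t. integral\<^sup>L P (\<lambda>w. X w t j))"
      by (rule mean_cont[OF P]) (use X_rv X_L2 L2cont j in auto)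
    have eq: "\<And>t. t \<in> T \<Longrightarrow> \<mu> t j = integral\<^sup>L P (\<lambda>w. X w t j)" using mean j by auto
    show ?thesis by (rule iffD2[OF continuous_on_cong[OF refl eq] cont])
  qed
  have muSq: "sqint T (\<lambda>t. \<mu> t j)" if "j \<in> {1..p}" for j
    unfolding T_def by (rule cont_sqint) (use mucont[OF that] in \<open>simp add: T_def\<close>)
  have Xsq: "sqint T (\<lambda>t. X \<omega> t j)" if "j \<in> {1..p}" for j
    using paths \<omega> that unfolding inH_def by auto
  have psisq: "sqint T (\<lambda>t. \<psi> i t j)" if "i \<in> {1..M}" "j \<in> {1..p}" for i j
    using psi_H that unfolding inH_def by auto
  have intF: "\<forall>j\<in>{1..p}. set_integrable lborel T (\<lambda>t. (X \<omega> t j - \<mu> t j) * \<psi> i t j)"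
    if i: "i \<in> {1..M}" for i
  proof
    fix j assume j: "j \<in> {1..p}"
    have "set_integrable lborel T (\<lambda>t. X \<omega> t j * \<psi> i t j - \<mu> t j * \<psi> i t j)"
      by (rule set_integral_diff(1)[OF sqint_prod[OF Xsq psisq] sqint_prod[OF muSq psisq]])
        (use i j in auto)
    then show "set_integrable lborel T (\<lambda>t. (X \<omega> t j - \<mu> t j) * \<psi> i t j)"
      by (simp add: left_diff_distrib)
  qed
  have A: "innerH T p (\<lambda>t j. Xhat Tsub d Q (X \<omega>) \<mu> t j - \<mu> t j) (\<psi> i) = (\<Sum>c\<in>Q. z i c)"
    if Q: "Q \<subseteq> N" and i: "i \<in> {1..M}" for Q i
    unfolding z_def F_def
    by (rule innerH_Xhat[OF Tm Tsm sub Tsub_disj intF[OF i]]) (use Q in \<open>simp add: N_def\<close>)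
  have B: "innerH T p (\<lambda>t j. X \<omega> t j - \<mu> t j) (\<psi> i) = (\<Sum>c\<in>N. z i c)"
    if i: "i \<in> {1..M}" for i
  proof -
    have "innerH T p (\<lambda>t j. X \<omega> t j - \<mu> t j) (\<psi> i)
        = innerH T p (\<lambda>t j. Xhat Tsub d N (X \<omega>) \<mu> t j - \<mu> t j) (\<psi> i)"
      unfolding innerH_def
    proof (rule sum.cong[OF refl])
      fix j assume j: "j \<in> {1..p}"
      show "(LINT t:T|lborel. (X \<omega> t j - \<mu> t j) * \<psi> i t j)
          = (LINT t:T|lborel. (Xhat Tsub d N (X \<omega>) \<mu> t j - \<mu> t j) * \<psi> i t j)"
      proof (rule set_lebesgue_integral_cong[OF Tm], intro allI impI)
        fix t assume t: "t \<in> T"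
        then obtain b where "b \<in> {1..d}" "t \<in> Tsub b" using Tsub_union by blast
        then have "Xhat Tsub d N (X \<omega>) \<mu> t j = X \<omega> t j"
          using j unfolding Xhat_def N_def by auto
        then show "(X \<omega> t j - \<mu> t j) * \<psi> i t j = (Xhat Tsub d N (X \<omega>) \<mu> t j - \<mu> t j) * \<psi> i t j"
          by simp
      qed
    qed
    also have "\<dots> = (\<Sum>c\<in>N. z i c)" by (rule A[OF subset_refl i])
    finally show ?thesis .
  qed
  have C: "innerS (Tsub a) (\<lambda>t. X \<omega> t k - \<mu> t k) (\<lambda>t. \<psi> i t k) = z i (k, a)" for i
    by (simp add: innerS_def z_def F_def)
  have fN: "finite N" by (simp add: N_def)
  have kaN: "(k, a) \<in> N" using k a by (simp add: N_def)
  have "shapley N (\<lambda>Q. fMMD2 T p \<pi> \<psi> M (Xhat Tsub d Q (X \<omega>) \<mu>) \<mu>) (k, a)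
      = shapley N (\<lambda>Q. \<Sum>i\<in>{1..M}. (1 / \<pi> i) * (\<Sum>c\<in>Q. z i c)^2) (k, a)"
  proof (rule shapley_cong[OF _ kaN])
    fix Q assume Q: "Q \<subseteq> N"
    show "fMMD2 T p \<pi> \<psi> M (Xhat Tsub d Q (X \<omega>) \<mu>) \<mu> = (\<Sum>i\<in>{1..M}. (1 / \<pi> i) * (\<Sum>c\<in>Q. z i c)^2)"
      unfolding fMMD2_def using A[OF Q] by (intro sum.cong) auto
  qed
  also have "\<dots> = (\<Sum>i\<in>{1..M}. (1 / \<pi> i) * shapley N (\<lambda>Q. (\<Sum>c\<in>Q. z i c)^2) (k, a))"
    by (rule shapley_lin)
  also have "\<dots> = (\<Sum>i\<in>{1..M}. (1 / \<pi> i) * (z i (k, a) * (\<Sum>c\<in>N. z i c)))"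
    using shapley_sq[OF fN kaN] by simp
  also have "\<dots> = (\<Sum>i\<in>{1..M}. (1 / \<pi> i)
              * innerS (Tsub a) (\<lambda>t. X \<omega> t k - \<mu> t k) (\<lambda>t. \<psi> i t k)
              * innerH T p (\<lambda>t j. X \<omega> t j - \<mu> t j) (\<psi> i))"
    using B C by (intro sum.cong) auto
  finally show ?thesis unfolding N_def .
qed

end
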